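(* In the setting of the adaptive implicit-explicit iteration described in the context, let $a>0$ and suppose the step size satisfies $\eta^{-1}\ge\|\bm T\|+2a$. Then for every $k\ge0$, $f(\bm d_k)-f(\bm d_{k+1})\ge a\|\bm d_{k+1}-\bm d_k\|_2^2$ and $L(\bm d_k,\beta_k)-L(\bm d_{k+1},\beta_{k+1})\ge a\|\bm d_{k+1}-\bm d_k\|_2^2$.
   Context: Let $n\ge1$, $r>0$, $\bm g\in\mathbb R^n$ with $\bm g\neq0$, and $\bm H=\bm D+\bm T\in\mathbb R^{n\times n}$, where $\bm D$ is diagonal with nonnegative diagonal entries $D_{i,i}$ and $\bm T$ is symmetric; $\|\bm T\|$ is the spectral norm. Let $f(\bm d)=\bm g^\top\bm d+\frac12\bm d^\top\bm H\bm d$ and $L(\bm d,\beta)=f(\bm d)+\frac{\beta^2}{2}(\|\bm d\|_2^2-r^2)$. Adaptive implicit-explicit iteration with step size $\eta>0$: set $\bm d_0=-r\bm g/\|\bm g\|_2$ and $\lambda_0=0$. For $k=0,1,2,\dots$: let $\bm b_k=\bm d_k-\eta(\bm g+\bm T\bm d_k)$ and $\phi_k(\lambda)=\sum_{i=1}^n\big([\bm b_k]_i/(1+\eta(D_{i,i}+\lambda))\big)^2$; set $\lambda_{k+1}=0$ if $\phi_k(0)\le r^2$, and otherwise let $\lambda_{k+1}>0$ be the solution of $\phi_k(\lambda)=r^2$; then $\bm d_{k+1}=(\bm I+\eta(\bm D+\lambda_{k+1}\bm I))^{-1}\bm b_k$. Finally $\beta_k=\sqrt{\lambda_k}$. *)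

theory Defs
  imports "HOL-Analysis.Analysis"
begin

definition aie_phi :: "real \<Rightarrow> real^'n^'n \<Rightarrow> real^'n \<Rightarrow> real \<Rightarrow> real" where
  "aie_phi \<eta> D b lam = (\<Sum>i\<in>UNIV. (b$i / (1 + \<eta> * (D$i$i + lam)))^2)"

definition aie_lambda :: "real \<Rightarrow> real \<Rightarrow> real^'n^'n \<Rightarrow> real^'n \<Rightarrow> real" where
  "aie_lambda \<eta> r D b =
     (if aie_phi \<eta> D b 0 \<le> r^2 then 0
      else (THE lam. lam > 0 \<and> aie_phi \<eta> D b lam = r^2))"

primrec aie_iter :: "real \<Rightarrow> real \<Rightarrow> real^'n \<Rightarrow> real^'n^'n \<Rightarrow> real^'n^'n \<Rightarrow> nat \<Rightarrow> (real^'n) \<times> real" where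
  "aie_iter \<eta> r g D T 0 = (- (r / norm g) *\<^sub>R g, 0)"
| "aie_iter \<eta> r g D T (Suc k) =
     (let d = fst (aie_iter \<eta> r g D T k);
          b = d - \<eta> *\<^sub>R (g + T *v d);
          lam = aie_lambda \<eta> r D b
      in (matrix_inv (mat 1 + \<eta> *\<^sub>R (D + lam *\<^sub>R mat 1)) *v b, lam))"

definition aie_d :: "real \<Rightarrow> real \<Rightarrow> real^'n \<Rightarrow> real^'n^'n \<Rightarrow> real^'n^'n \<Rightarrow> nat \<Rightarrow> real^'n" where
  "aie_d \<eta> r g D T k = fst (aie_iter \<eta> r g D T k)"

definition aie_beta :: "real \<Rightarrow> real \<Rightarrow> real^'n \<Rightarrow> real^'n^'n \<Rightarrow> real^'n^'n \<Rightarrow> nat \<Rightarrow> real" where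
  "aie_beta \<eta> r g D T k = sqrt (snd (aie_iter \<eta> r g D T k))"

definition trs_f :: "real^'n \<Rightarrow> real^'n^'n \<Rightarrow> real^'n \<Rightarrow> real" where
  "trs_f g H d = g \<bullet> d + 1/2 * (d \<bullet> (H *v d))"

definition trs_L :: "real \<Rightarrow> real^'n \<Rightarrow> real^'n^'n \<Rightarrow> real^'n \<Rightarrow> real \<Rightarrow> real" where
  "trs_L r g H d \<beta> = trs_f g H d + \<beta>^2 / 2 * ((norm d)^2 - r^2)"

end

theory Submission imports Defs begin

lemma diag_mv:
  fixes A :: "real^'n^'n"
  assumes "\<forall>i j. i \<noteq> j \<longrightarrow> A$i$j = 0"
  shows "A *v x = (\<chi> i. A$i$i * x$i)"
proof -
  have "(\<Sum>j\<in>UNIV. A$i$j * x$j) = A$i$i * x$i" for i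
  proof -
    have "(\<Sum>j\<in>UNIV. A$i$j * x$j) = A$i$i * x$i + (\<Sum>j\<in>UNIV-{i}. A$i$j * x$j)"
      by (simp add: sum.remove)
    also have "(\<Sum>j\<in>UNIV-{i}. A$i$j * x$j) = 0" using assms by (intro sum.neutral) auto
    finally show ?thesis by simp
  qed
  then show ?thesis by (simp add: matrix_vector_mult_def vec_eq_iff)
qed

lemma inv_apply:
  fixes M :: "real^'n^'n"
  assumes "invertible M"
  shows "M *v (matrix_inv M *v b) = b"
proof -
  have "M ** matrix_inv M = mat 1"
    using assms unfolding invertible_def matrix_inv_def by (rule someI_ex[THEN conjunct1])
  then show ?thesis by (simp add: matrix_vector_mul_assoc)
qed

lemma diag_invertible:
  fixes M :: "real^'n^'n"
  assumes "\<forall>i j. i \<noteq> j \<longrightarrow> M$i$j = 0" "\<forall>i. M$i$i \<noteq> 0"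
  shows "invertible M"
proof -
  have "inj ((*v) M)"
    unfolding inj_def using assms by (auto simp: diag_mv[OF assms(1)] vec_eq_iff)
  then show ?thesis
    by (simp add: invertible_left_inverse matrix_left_invertible_injective)
qed

lemma sq_div_mono: "0 < q \<Longrightarrow> q \<le> p \<Longrightarrow> ((x::real)/p)^2 \<le> (x/q)^2"
proof -
  assume a: "0 < q" "q \<le> p"
  have "q^2 \<le> p^2" using a by (intro power_mono) auto
  then have "x^2/p^2 \<le> x^2/q^2" using a by (intro divide_left_mono) auto
  then show ?thesis by (simp add: power_divide)
qed

lemma sq_div_strict: "x \<noteq> 0 \<Longrightarrow> 0 < q \<Longrightarrow> q < p \<Longrightarrow> ((x::real)/p)^2 < (x/q)^2"
proof -
  assume a: "x \<noteq> 0" "0 < q" "q < p"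
  have "q^2 < p^2" using a by (intro power_strict_mono) auto
  then have "x^2/p^2 < x^2/q^2" using a by (intro divide_strict_left_mono) auto
  then show ?thesis by (simp add: power_divide)
qed

lemma phi_strict:
  fixes D :: "real^'n^'n"
  assumes "\<forall>i. D$i$i \<ge> 0" "\<eta> > 0" "b \<noteq> 0" "0 \<le> l1" "l1 < l2"
  shows "aie_phi \<eta> D b l2 < aie_phi \<eta> D b l1"
proof -
  obtain i where i: "b$i \<noteq> 0" using assms(3) by (auto simp: vec_eq_iff)
  have pos: "0 < 1 + \<eta> * (D$j$j + l1)" for j using assms
    by (smt (verit) mult_nonneg_nonneg)
  have lt: "1 + \<eta> * (D$j$j + l1) < 1 + \<eta> * (D$j$j + l2)" for j using assms by simp
  show ?thesis unfolding aie_phi_def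
  proof (rule sum_strict_mono_ex1)
    show "\<forall>j\<in>UNIV. (b $ j / (1 + \<eta> * (D $ j $ j + l2)))\<^sup>2 \<le> (b $ j / (1 + \<eta> * (D $ j $ j + l1)))\<^sup>2"
      by (intro ballI sq_div_mono[OF pos] less_imp_le[OF lt])
    show "\<exists>j\<in>UNIV. (b $ j / (1 + \<eta> * (D $ j $ j + l2)))\<^sup>2 < (b $ j / (1 + \<eta> * (D $ j $ j + l1)))\<^sup>2"
    proof
      show "(b $ i / (1 + \<eta> * (D $ i $ i + l2)))\<^sup>2 < (b $ i / (1 + \<eta> * (D $ i $ i + l1)))\<^sup>2"
        by (rule sq_div_strict[OF i pos lt])
    qed simp
  qed simp
qed

lemma phi_large:
  fixes D :: "real^'n^'n"
  assumes "\<forall>i. D$i$i \<ge> 0" "\<eta> > 0" "r > 0"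
  shows "aie_phi \<eta> D b (norm b / r / \<eta>) \<le> r^2"
proof -
  define q where "q = 1 + norm b / r"
  have q: "q = 1 + \<eta> * (norm b / r / \<eta>)" using assms by (simp add: q_def)
  have qpos: "q > 0" using assms by (simp add: q_def add_pos_nonneg)
  have "aie_phi \<eta> D b (norm b / r / \<eta>) \<le> (\<Sum>i\<in>UNIV. (b$i / q)^2)"
    unfolding aie_phi_def
  proof (rule sum_mono)
    fix i
    have "q \<le> 1 + \<eta> * (D$i$i + norm b / r / \<eta>)" unfolding q using assms
      by (simp add: distrib_left)
    then show "(b$i / (1 + \<eta> * (D$i$i + norm b / r / \<eta>)))^2 \<le> (b$i / q)^2"
      by (rule sq_div_mono[OF qpos])
  qed
  also have "(\<Sum>i\<in>UNIV. (b$i / q)^2) = (norm b)^2 / q^2"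
  proof -
    have "(norm b)^2 = (\<Sum>i\<in>UNIV. (b$i)^2)"
      unfolding power2_norm_eq_inner inner_vec_def by (simp add: power2_eq_square)
    then show ?thesis by (simp add: power_divide sum_divide_distrib[symmetric])
  qed
  also have "\<dots> \<le> r^2"
  proof -
    have "norm b \<le> r * q" using assms by (simp add: q_def distrib_left)
    then have "(norm b)^2 \<le> (r*q)^2" by (intro power_mono) auto
    then show ?thesis using qpos by (simp add: divide_le_eq power_mult_distrib)
  qed
  finally show ?thesis .
qed

lemma lam_props:
  fixes D :: "real^'n^'n"
  assumes "\<forall>i. D$i$i \<ge> 0" "\<eta> > 0" "r > 0"
  shows "aie_lambda \<eta> r D b \<ge> 0 \<and> aie_phi \<eta> D b (aie_lambda \<eta> r D b) \<le> r^2
     \<and> (aie_lambda \<eta> r D b > 0 \<longrightarrow> aie_phi \<eta> D b (aie_lambda \<eta> r D b) = r^2)"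
proof (cases "aie_phi \<eta> D b 0 \<le> r^2")
  case True
  then show ?thesis by (simp add: aie_lambda_def)
next
  case False
  have bnz: "b \<noteq> 0"
  proof
    assume "b = 0"
    then have "aie_phi \<eta> D b 0 = 0" by (simp add: aie_phi_def)
    with False show False by simp
  qed
  have ex: "\<exists>l. 0 \<le> l \<and> l \<le> norm b / r / \<eta> \<and> aie_phi \<eta> D b l = r^2"
  proof (rule IVT2)
    show "aie_phi \<eta> D b (norm b / r / \<eta>) \<le> r^2" by (rule phi_large[OF assms])
    show "r^2 \<le> aie_phi \<eta> D b 0" using False by simp
    show "0 \<le> norm b / r / \<eta>" using assms by simp
    show "\<forall>x. 0 \<le> x \<and> x \<le> norm b / r / \<eta> \<longrightarrow> isCont (aie_phi \<eta> D b) x"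
    proof (intro allI impI)
      fix x :: real assume x: "0 \<le> x \<and> x \<le> norm b / r / \<eta>"
      have "1 + \<eta> * (D$i$i + x) \<noteq> 0" for i using assms x
        by (smt (verit) mult_nonneg_nonneg)
      then show "isCont (aie_phi \<eta> D b) x"
        unfolding aie_phi_def[abs_def] by (intro continuous_intros) auto
    qed
  qed
  then obtain l where l: "0 \<le> l" "aie_phi \<eta> D b l = r^2" by blast
  have lpos: "l > 0" using l False by (cases "l = 0") auto
  have uniq: "\<exists>!l. l > 0 \<and> aie_phi \<eta> D b l = r^2"
  proof (rule ex1I[of _ l])
    show "l > 0 \<and> aie_phi \<eta> D b l = r^2" using lpos l by simp
    fix m assume m: "m > 0 \<and> aie_phi \<eta> D b m = r^2"
    show "m = l"
    proof (rule ccontr)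
      assume "m \<noteq> l"
      then consider "m < l" | "l < m" by linarith
      then show False
      proof cases
        case 1 then show False using phi_strict[OF assms(1,2) bnz, of m l] m l by simp
      next
        case 2 then show False using phi_strict[OF assms(1,2) bnz, of l m] m l by simp
      qed
    qed
  qed
  have "aie_lambda \<eta> r D b = (THE l. l > 0 \<and> aie_phi \<eta> D b l = r^2)"
    using False by (simp add: aie_lambda_def)
  with theI'[OF uniq] show ?thesis by auto
qed

lemma sym_inner:
  fixes A :: "real^'n^'n"
  assumes "transpose A = A"
  shows "inner x (A *v y) = inner y (A *v x)"
proof -
  have "inner x (A *v y) = inner (x v* A) y" by (simp add: dot_lmul_matrix)
  also have "x v* A = A *v x" using vector_transpose_matrix[of x A] assms by simp
  finally show ?thesis by (simp add: inner_commute)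
qed

lemma energy_id:
  fixes D T :: "real^'n^'n" and d e g :: "real^'n"
  assumes Ds: "transpose D = D" and Ts: "transpose T = T" and eta: "\<eta> > 0"
    and eq: "e + \<eta> *\<^sub>R (D *v e) + (\<eta>*lam) *\<^sub>R e = d - \<eta> *\<^sub>R (g + T *v d)"
  shows "trs_f g (D + T) d - trs_f g (D + T) e =
     (norm (e - d))^2 / \<eta> + lam * inner e (e - d) + inner (e - d) (D *v (e - d)) / 2
     - inner (e - d) (T *v (e - d)) / 2"
proof -
  have sD: "inner d (D *v e) = inner e (D *v d)" by (rule sym_inner[OF Ds])
  have sT: "inner d (T *v e) = inner e (T *v d)" by (rule sym_inner[OF Ts])
  have X: "trs_f g (D + T) d - trs_f g (D + T) e = inner g d - inner g e
      + (inner d (D *v d) + inner d (T *v d) - inner e (D *v e) - inner e (T *v e)) / 2"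
    by (simp add: trs_f_def matrix_vector_mult_add_rdistrib inner_add_right algebra_simps) (simp add: field_simps)
  have "inner (e + \<eta> *\<^sub>R (D *v e) + (\<eta>*lam) *\<^sub>R e) (e - d) = inner (d - \<eta> *\<^sub>R (g + T *v d)) (e - d)"
    using eq by simp
  then have Y: "inner e e - inner e d + \<eta> * (inner e (D *v e) - inner d (D *v e)) + \<eta>*lam*(inner e e - inner e d)
     = inner d e - inner d d - \<eta> * (inner g e - inner g d) - \<eta> * (inner e (T *v d) - inner d (T *v d))"
    by (simp add: inner_add_left inner_diff_left inner_diff_right inner_commute algebra_simps)
  have Z: "(norm (e - d))^2 = inner e e - 2 * inner e d + inner d d"
    by (simp add: power2_norm_eq_inner inner_diff_left inner_diff_right inner_commute)
  have W1: "inner (e - d) (D *v (e - d)) = inner e (D *v e) - 2 * inner e (D *v d) + inner d (D *v d)"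
    using sD by (simp add: matrix_vector_mult_diff_distrib inner_diff_left inner_diff_right)
  have W2: "inner (e - d) (T *v (e - d)) = inner e (T *v e) - 2 * inner e (T *v d) + inner d (T *v d)"
    using sT by (simp add: matrix_vector_mult_diff_distrib inner_diff_left inner_diff_right)
  have W3: "inner e (e - d) = inner e e - inner e d" by (simp add: inner_diff_right)
  have ic: "inner d e = inner e d" by (simp add: inner_commute)
  show ?thesis unfolding X Z W1 W2 W3 using Y sD ic eta
    by (simp add: field_simps)
qed

lemma step_props:
  fixes D :: "real^'n^'n" and b :: "real^'n"
  assumes Dd: "\<forall>i j. i \<noteq> j \<longrightarrow> D$i$j = 0" and Dn: "\<forall>i. D$i$i \<ge> 0"
    and eta: "\<eta> > 0" and r: "r > 0"
  defines "lam \<equiv> aie_lambda \<eta> r D b"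
  defines "e \<equiv> matrix_inv (mat 1 + \<eta> *\<^sub>R (D + lam *\<^sub>R mat 1)) *v b"
  shows "lam \<ge> 0 \<and> norm e \<le> r \<and> (lam > 0 \<longrightarrow> norm e = r)
    \<and> e + \<eta> *\<^sub>R (D *v e) + (\<eta>*lam) *\<^sub>R e = b"
proof -
  have L: "lam \<ge> 0" "aie_phi \<eta> D b lam \<le> r^2" "lam > 0 \<longrightarrow> aie_phi \<eta> D b lam = r^2"
    using lam_props[OF Dn eta r, of b] unfolding lam_def by auto
  define M where "M = mat 1 + \<eta> *\<^sub>R (D + lam *\<^sub>R mat 1)"
  have Mdiag: "\<forall>i j. i \<noteq> j \<longrightarrow> M$i$j = 0" using Dd by (simp add: M_def mat_def)
  have Mii: "M$i$i = 1 + \<eta> * (D$i$i + lam)" for i by (simp add: M_def mat_def)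
  have Mpos: "M$i$i > 0" for i unfolding Mii using Dn L(1) eta
    by (smt (verit) mult_nonneg_nonneg)
  have inv: "invertible M" using Mdiag Mpos by (intro diag_invertible) (auto simp: less_imp_neq[symmetric])
  have Me: "M *v e = b" unfolding e_def M_def[symmetric] by (rule inv_apply[OF inv])
  then have comp: "M$i$i * e$i = b$i" for i by (simp add: diag_mv[OF Mdiag] vec_eq_iff)
  have ei: "e$i = b$i / (1 + \<eta> * (D$i$i + lam))" for i
    using comp[of i] Mpos[of i] unfolding Mii by (simp add: field_simps)
  have ne: "(norm e)^2 = aie_phi \<eta> D b lam"
    unfolding power2_norm_eq_inner inner_vec_def aie_phi_def by (simp add: ei power2_eq_square)
  have nle: "norm e \<le> r" by (rule power2_le_imp_le) (use ne L(2) r in auto)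
  have neq: "lam > 0 \<longrightarrow> norm e = r"
  proof
    assume "lam > 0"
    then have "(norm e)^2 = r^2" using ne L(3) by simp
    then show "norm e = r" by (rule power2_eq_imp_eq) (use r in auto)
  qed
  have "e + \<eta> *\<^sub>R (D *v e) + (\<eta>*lam) *\<^sub>R e = b"
  proof -
    have "e$i + \<eta> * (D$i$i * e$i) + \<eta> * lam * e$i = b$i" for i
    proof -
      have "e$i + \<eta> * (D$i$i * e$i) + \<eta> * lam * e$i = (1 + \<eta> * (D$i$i + lam)) * e$i"
        by (simp add: algebra_simps)
      also have "\<dots> = b$i" using comp[of i] unfolding Mii .
      finally show ?thesis .
    qed
    then show ?thesis by (simp add: diag_mv[OF Dd] vec_eq_iff)
  qed
  then show ?thesis using L(1) nle neq by simp
qed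

lemma energy_bound:
  fixes D T :: "real^'n^'n" and d e g :: "real^'n"
  assumes Dd: "\<forall>i j. i \<noteq> j \<longrightarrow> D$i$j = 0" and Dn: "\<forall>i. D$i$i \<ge> 0"
    and Ts: "transpose T = T" and eta: "\<eta> > 0" and a: "a > 0"
    and step: "1 / \<eta> \<ge> onorm (\<lambda>x. T *v x) + 2 * a"
    and eq: "e + \<eta> *\<^sub>R (D *v e) + (\<eta>*lam) *\<^sub>R e = d - \<eta> *\<^sub>R (g + T *v d)"
    and lam: "lam \<ge> 0" and nd: "norm d \<le> r" and ne: "lam > 0 \<longrightarrow> norm e = r"
  shows "trs_f g (D + T) d - trs_f g (D + T) e \<ge> a * (norm (e - d))^2"
proof -
  have Ds: "transpose D = D" 
  proof -
    have "D$j$i = D$i$j" for i j using Dd by (cases "i = j") auto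
    then show ?thesis by (simp add: transpose_def vec_eq_iff)
  qed
  define v where "v = e - d"
  have id: "trs_f g (D + T) d - trs_f g (D + T) e =
     (norm v)^2 / \<eta> + lam * inner e v + inner v (D *v v) / 2 - inner v (T *v v) / 2"
    unfolding v_def by (rule energy_id[OF Ds Ts eta eq])
  have t1: "lam * inner e v \<ge> 0"
  proof (cases "lam > 0")
    case True
    then have "norm e = r" using ne by simp
    moreover have "inner e d \<le> norm e * norm d" by (rule norm_cauchy_schwarz)
    moreover have "r * norm d \<le> r * r" using nd \<open>norm e = r\<close> norm_ge_zero[of e]
      by (intro mult_left_mono) auto
    ultimately have "inner e d \<le> r * r" by simp
    moreover have "inner e e = r * r" using \<open>norm e = r\<close> by (simp add: dot_square_norm power2_eq_square)
    ultimately have "inner e v \<ge> 0" by (simp add: v_def inner_diff_right)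
    then show ?thesis using lam by simp
  qed (use lam in simp)
  have t2: "inner v (D *v v) \<ge> 0"
  proof -
    have "v$i * (D$i$i * v$i) = D$i$i * (v$i * v$i)" for i by (simp add: algebra_simps)
    moreover have "D$i$i * (v$i * v$i) \<ge> 0" for i using Dn by (simp add: mult_nonneg_nonneg)
    ultimately have h: "v$i * (D$i$i * v$i) \<ge> 0" for i by metis
    have "(\<Sum>i\<in>UNIV. v $ i * (D $ i $ i * v $ i)) \<ge> 0" by (rule sum_nonneg) (rule h)
    then show ?thesis by (simp add: diag_mv[OF Dd] inner_vec_def)
  qed
  have t3: "inner v (T *v v) \<le> onorm (\<lambda>x. T *v x) * (norm v)^2"
  proof -
    have "inner v (T *v v) \<le> norm v * norm (T *v v)" by (rule norm_cauchy_schwarz)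
    also have "norm (T *v v) \<le> onorm (\<lambda>x. T *v x) * norm v"
      by (rule onorm) simp
    then have "norm v * norm (T *v v) \<le> norm v * (onorm (\<lambda>x. T *v x) * norm v)"
      by (simp add: mult_left_mono)
    finally show ?thesis by (simp add: power2_eq_square algebra_simps)
  qed
  have on: "onorm (\<lambda>x. T *v x) \<ge> 0" by (rule onorm_pos_le) simp
  have "(norm v)^2 / \<eta> \<ge> (onorm (\<lambda>x. T *v x) + 2 * a) * (norm v)^2"
  proof -
    have "(onorm (\<lambda>x. T *v x) + 2 * a) * (norm v)^2 \<le> (1 / \<eta>) * (norm v)^2"
      using step by (intro mult_right_mono) auto
    then show ?thesis by simp
  qed
  moreover have "onorm (\<lambda>x. T *v x) * (norm v)^2 \<ge> 0" using on by simp
  moreover have "a * (norm v)^2 \<ge> 0" using a by simp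
  moreover have "(onorm (\<lambda>x. T *v x) + 2 * a) * (norm v)^2
     = onorm (\<lambda>x. T *v x) * (norm v)^2 + 2 * (a * (norm v)^2)" by (simp add: algebra_simps)
  ultimately have fin: "a * (norm v)^2 \<le> (norm v)^2 / \<eta> + lam * inner e v + inner v (D *v v) / 2 - inner v (T *v v) / 2"
    using t1 t2 t3 by linarith
  show ?thesis using fin id by (simp add: v_def)
qed
lemma iter_inv:
  fixes D T :: "real^'n^'n" and g :: "real^'n"
  assumes Dd: "\<forall>i j. i \<noteq> j \<longrightarrow> D$i$j = 0" and Dn: "\<forall>i. D$i$i \<ge> 0"
    and eta: "\<eta> > 0" and r: "r > 0" and g: "g \<noteq> 0"
  shows "norm (aie_d \<eta> r g D T k) \<le> r \<and> snd (aie_iter \<eta> r g D T k) \<ge> 0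
    \<and> snd (aie_iter \<eta> r g D T k) * ((norm (aie_d \<eta> r g D T k))^2 - r^2) = 0"
proof (cases k)
  case 0
  have "norm (aie_d \<eta> r g D T 0) = r" using r g by (simp add: aie_d_def)
  then show ?thesis using 0 by simp
next
  case (Suc m)
  define d where "d = aie_d \<eta> r g D T m"
  define b where "b = d - \<eta> *\<^sub>R (g + T *v d)"
  define lam where "lam = aie_lambda \<eta> r D b"
  have e: "aie_d \<eta> r g D T k = matrix_inv (mat 1 + \<eta> *\<^sub>R (D + lam *\<^sub>R mat 1)) *v b"
    using Suc by (simp add: aie_d_def Let_def d_def b_def lam_def)
  have l: "snd (aie_iter \<eta> r g D T k) = lam"
    using Suc by (simp add: aie_d_def Let_def d_def b_def lam_def)
  have P: "lam \<ge> 0 \<and> norm (aie_d \<eta> r g D T k) \<le> r \<and> (lam > 0 \<longrightarrow> norm (aie_d \<eta> r g D T k) = r)"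
    unfolding e lam_def using step_props[OF Dd Dn eta r, of b] by simp
  then show ?thesis unfolding l by (cases "lam > 0") auto
qed

theorem mainTheorem4:
  fixes g :: "real^'n" and D T :: "real^'n^'n" and r \<eta> a :: real
  assumes r_pos: "r > 0"
    and g_nz: "g \<noteq> 0"
    and D_diag: "\<forall>i j. i \<noteq> j \<longrightarrow> D$i$j = 0"
    and D_nonneg: "\<forall>i. D$i$i \<ge> 0"
    and T_sym: "transpose T = T"
    and a_pos: "a > 0"
    and eta_pos: "\<eta> > 0"
    and step: "1 / \<eta> \<ge> onorm (\<lambda>x. T *v x) + 2 * a"
  shows "\<forall>k. trs_f g (D + T) (aie_d \<eta> r g D T k) - trs_f g (D + T) (aie_d \<eta> r g D T (Suc k))
               \<ge> a * (norm (aie_d \<eta> r g D T (Suc k) - aie_d \<eta> r g D T k))^2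
          \<and> trs_L r g (D + T) (aie_d \<eta> r g D T k) (aie_beta \<eta> r g D T k)
              - trs_L r g (D + T) (aie_d \<eta> r g D T (Suc k)) (aie_beta \<eta> r g D T (Suc k))
               \<ge> a * (norm (aie_d \<eta> r g D T (Suc k) - aie_d \<eta> r g D T k))^2"
proof
  fix k
  define d where "d = aie_d \<eta> r g D T k"
  define b where "b = d - \<eta> *\<^sub>R (g + T *v d)"
  define lam where "lam = aie_lambda \<eta> r D b"
  define e where "e = aie_d \<eta> r g D T (Suc k)"
  have e_eq: "e = matrix_inv (mat 1 + \<eta> *\<^sub>R (D + lam *\<^sub>R mat 1)) *v b"
    by (simp add: e_def aie_d_def Let_def d_def b_def lam_def)
  have P: "lam \<ge> 0 \<and> norm e \<le> r \<and> (lam > 0 \<longrightarrow> norm e = r)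
    \<and> e + \<eta> *\<^sub>R (D *v e) + (\<eta>*lam) *\<^sub>R e = b"
    unfolding e_eq lam_def by (rule step_props[OF D_diag D_nonneg eta_pos r_pos])
  have Id: "norm d \<le> r" using iter_inv[OF D_diag D_nonneg eta_pos r_pos g_nz, of T k] by (simp add: d_def)
  have F: "trs_f g (D + T) d - trs_f g (D + T) e \<ge> a * (norm (e - d))^2"
  proof (rule energy_bound[OF D_diag D_nonneg T_sym eta_pos a_pos step])
    show "e + \<eta> *\<^sub>R (D *v e) + (\<eta>*lam) *\<^sub>R e = d - \<eta> *\<^sub>R (g + T *v d)"
      using P by (simp add: b_def)
  qed (use P Id in auto)
  define l0 where "l0 = snd (aie_iter \<eta> r g D T k)"
  define l1 where "l1 = snd (aie_iter \<eta> r g D T (Suc k))"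
  have I0: "l0 \<ge> 0 \<and> l0 * ((norm d)^2 - r^2) = 0"
    using iter_inv[OF D_diag D_nonneg eta_pos r_pos g_nz, of T k] by (simp add: d_def l0_def)
  have I1: "l1 \<ge> 0 \<and> l1 * ((norm e)^2 - r^2) = 0"
    using iter_inv[OF D_diag D_nonneg eta_pos r_pos g_nz, of T "Suc k"] by (simp only: e_def l1_def)
  have B0: "(aie_beta \<eta> r g D T k)^2 = l0"
    using I0 by (simp add: aie_beta_def l0_def)
  have B1: "(aie_beta \<eta> r g D T (Suc k))^2 = l1"
    using I1 unfolding aie_beta_def l1_def by simp
  have Z0: "l0 / 2 * ((norm d)^2 - r^2) = 0" using I0 by simp
  have Z1: "l1 / 2 * ((norm e)^2 - r^2) = 0" using I1 by simp
  have "trs_L r g (D + T) d (aie_beta \<eta> r g D T k) - trs_L r g (D + T) e (aie_beta \<eta> r g D T (Suc k))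
      = trs_f g (D + T) d - trs_f g (D + T) e"
    unfolding trs_L_def B0 B1 Z0 Z1 by simp
  then show "trs_f g (D + T) (aie_d \<eta> r g D T k) - trs_f g (D + T) (aie_d \<eta> r g D T (Suc k))
               \<ge> a * (norm (aie_d \<eta> r g D T (Suc k) - aie_d \<eta> r g D T k))^2
          \<and> trs_L r g (D + T) (aie_d \<eta> r g D T k) (aie_beta \<eta> r g D T k)
              - trs_L r g (D + T) (aie_d \<eta> r g D T (Suc k)) (aie_beta \<eta> r g D T (Suc k))
               \<ge> a * (norm (aie_d \<eta> r g D T (Suc k) - aie_d \<eta> r g D T k))^2"
    using F unfolding d_def e_def by simp
qed

end
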